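(* Fix a sampler time $t\in(0,1]$, step size $\delta_t>0$, noise level $\sigma_t>0$, a state $x_t\in\mathbb{R}^d$ and context $c$. Let $\mu_t(v)=U_t+B_t v$ be the one-step mean as a function of a velocity $v\in\mathbb{R}^d$, where $U_t$ does not depend on $v$ and $B_t=-\delta_t-(1-t)\frac{\sigma_t^2\delta_t}{2t}$ is a scalar, and let $\Sigma_t$ be a fixed symmetric positive definite covariance. Let $v^{\mathrm{old}}\in\mathbb{R}^d$ be a fixed (rollout) velocity not depending on $\theta$, let $v_\theta=v_\theta(x_t,t,c)$ be a differentiable parametric velocity, let $\beta>0$, $\Delta v_\theta=v_\theta-v^{\mathrm{old}}$, $v^{\pm}_\theta=v^{\mathrm{old}}\pm\beta\Delta v_\theta$, $\mu^{\mathrm{old}}_t=\mu_t(v^{\mathrm{old}})$, $\mu^{\pm}_{\theta,t}=\mu_t(v^\pm_\theta)$. For an observed next state $x_{t^-}$ let $E^{\pm}_{\theta,t}=\|x_{t^-}-\mu^\pm_{\theta,t}\|^2_{\Sigma_t^{-1}}$, $e_t=x_{t^-}-\mu^{\mathrm{old}}_t$, $d_t=\mu^+_{\theta,t}-\mu^{\mathrm{old}}_t$. Let $r\in[0,1]$, $y=2r-1$, $z_t=\tfrac12 y(E^+_{\theta,t}-E^-_{\theta,t})$ and $\ell_t(\theta)=\mathrm{softplus}(z_t)$. (a) $E^+_{\theta,t}-E^-_{\theta,t}=-4\langle\Sigma_t^{-1}e_t,d_t\rangle$. (b) $-\nabla_\theta\ell_t(\theta)=2\beta\,\sigma(z_t)\,y\,\big(\tfrac{\partial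 v_\theta}{\partial\theta}\big)^\top B_t\Sigma_t^{-1}e_t$; in particular $-\nabla_\theta\ell_t(\theta)\propto\sigma(z_t)\,y\,\big(\tfrac{\partial v_\theta}{\partial\theta}\big)^\top B_t\Sigma_t^{-1}e_t$, where $\sigma$ is the logistic sigmoid. (c) Suppose now $x_{t^-}$ and $r$ are random given $(x_t,c)$, that $r=o\in\{0,1\}$ is a binary outcome with $\alpha(x_t,c)=\mathbb{P}(o=1\mid x_t,c)$, that $\mu^{\mathrm{old}}_t=\mathbb{E}[x_{t^-}\mid x_t,c]$, and define $\mu^{\pm}_t(x_t,c)=\mathbb{E}[x_{t^-}\mid x_t,c,o=1]$ resp. $\mathbb{E}[x_{t^-}\mid x_t,c,o=0]$ and $\Delta\mu^\star_t(x_t,c)=\mu^+_t-\mu^-_t$. In the small-update regime in which $\sigma(z_t)$ is treated as a constant (as when $v_\theta\approx v^{\mathrm{old}}$), the conditional expected update direction is parallel to the oracle mean gap direction: $$\mathbb{E}[-\nabla_\theta\ell_t(\theta)\mid x_t,c]\ \parallel\ \Big(\frac{\partial v_\theta}{\partial\theta}\Big)^\top B_t\Sigma_t^{-1}\Delta\mu^\star_t(x_t,c).$$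
   Context: $\|u\|^2_M=u^\top Mu$, $\langle\cdot,\cdot\rangle$ is the Euclidean inner product, $\mathrm{softplus}(z)=\log(1+e^z)$, $\sigma(z)=1/(1+e^{-z})$. Gradients with respect to $\theta$ treat $v^{\mathrm{old}}$, $\mu^{\mathrm{old}}_t$, $e_t$ and $x_{t^-}$ as constants. The affine mean arises from the Euler–Maruyama step of a flow-matching reverse SDE $x_{t^-}=x_t-\big[v+\frac{\sigma_t^2}{2t}(x_t+(1-t)v)\big]\delta_t+\sigma_t\sqrt{\delta_t}\,\epsilon$, $\epsilon\sim\mathcal{N}(0,I)$, with $t^-=t-\delta_t$; $U_t=(1-\frac{\sigma_t^2\delta_t}{2t})x_t$. "Parallel" means equal up to a (nonnegative) scalar factor. *)

theory Defs
  imports "HOL-Probability.Probability"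
begin

definition softplus :: "real \<Rightarrow> real" where
  "softplus z = ln (1 + exp z)"

definition sigmoid :: "real \<Rightarrow> real" where
  "sigmoid z = 1 / (1 + exp (- z))"

definition wnorm2 :: "real^'n^'n \<Rightarrow> real^'n \<Rightarrow> real" where
  "wnorm2 A u = u \<bullet> (A *v u)"

definition spd :: "real^'n^'n \<Rightarrow> bool" where
  "spd S \<longleftrightarrow> transpose S = S \<and> (\<forall>u. u \<noteq> 0 \<longrightarrow> u \<bullet> (S *v u) > 0)"

definition Bcoef :: "real \<Rightarrow> real \<Rightarrow> real \<Rightarrow> real" where
  "Bcoef t dt sg = - dt - (1 - t) * (sg\<^sup>2 * dt / (2 * t))"

definition Ucoef :: "real \<Rightarrow> real \<Rightarrow> real \<Rightarrow> real^'n \<Rightarrow> real^'n" where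
  "Ucoef t dt sg x = (1 - sg\<^sup>2 * dt / (2 * t)) *\<^sub>R x"

definition mu_step :: "real \<Rightarrow> real \<Rightarrow> real \<Rightarrow> real^'n \<Rightarrow> real^'n \<Rightarrow> real^'n" where
  "mu_step t dt sg x v = Ucoef t dt sg x + Bcoef t dt sg *\<^sub>R v"

definition cond_mean :: "'a measure \<Rightarrow> ('a \<Rightarrow> real^'n) \<Rightarrow> 'a set \<Rightarrow> real^'n" where
  "cond_mean M X A = (1 / measure M A) *\<^sub>R (\<integral>\<omega>. indicator A \<omega> *\<^sub>R X \<omega> \<partial>M)"

end

theory Submission
  imports Defs
begin

lemma spd_inv_sym:
  fixes S :: "real^'n^'n"
  assumes "spd S"
  shows "transpose (matrix_inv S) = matrix_inv S"
proof -
  have ker: "\<forall>x. S *v x = 0 \<longrightarrow> x = 0"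
  proof (intro allI impI)
    fix x assume "S *v x = 0"
    then have "x \<bullet> (S *v x) = 0" by simp
    then show "x = 0" using assms unfolding spd_def by (metis less_irrefl)
  qed
  then have "invertible S"
    using matrix_left_invertible_ker invertible_left_inverse by metis
  then have inv: "S ** matrix_inv S = mat 1" "matrix_inv S ** S = mat 1"
    unfolding invertible_def matrix_inv_def by (metis (mono_tags, lifting) someI_ex)+
  have tS: "transpose S = S" using assms unfolding spd_def by simp
  have "transpose (matrix_inv S) ** S = mat 1"
    using inv(1) by (metis matrix_transpose_mul tS transpose_mat)
  then have "transpose (matrix_inv S) = (transpose (matrix_inv S) ** S) ** matrix_inv S"
    by (metis inv(1) matrix_mul_assoc matrix_mul_rid)
  then show ?thesis using \<open>transpose (matrix_inv S) ** S = mat 1\<close> by (simp add: matrix_mul_lid)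
qed

lemma sym_inner:
  fixes S :: "real^'n^'n"
  assumes "transpose S = S"
  shows "e \<bullet> (S *v w) = (S *v e) \<bullet> w"
  by (metis assms dot_lmul_matrix transpose_matrix_vector)

lemma quad_diff:
  fixes S :: "real^'n^'n"
  assumes "transpose S = S"
  shows "wnorm2 S (e - w) - wnorm2 S (e + w) = - 4 * ((S *v e) \<bullet> w)"
  using sym_inner[OF assms, of e w] sym_inner[OF assms, of w e]
  unfolding wnorm2_def
  by (simp add: matrix_vector_mult_diff_distrib matrix_vector_right_distrib inner_diff_left inner_diff_right
       inner_add_left inner_add_right inner_commute algebra_simps)

lemma softplus_deriv: "(softplus has_real_derivative sigmoid z) (at z)"
proof -
  have "((\<lambda>z. ln (1 + exp z)) has_real_derivative (exp z / (1 + exp z))) (at z)"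
    by (auto intro!: derivative_eq_intros simp: add_pos_pos)
  moreover have "exp z / (1 + exp z) = sigmoid z"
    unfolding sigmoid_def by (simp add: exp_minus field_simps add_pos_pos)
  ultimately show ?thesis unfolding softplus_def[abs_def] by simp
qed

lemma aux_vec:
  fixes R S1 S0 :: "'v::real_vector"
  shows "R = S1 - S0 - (1 - q) *\<^sub>R (S1 + S0) + q *\<^sub>R (S1 + S0) \<Longrightarrow>
    R = (2 * q) *\<^sub>R S1 - (2 * (1 - q)) *\<^sub>R S0"
proof -
  assume h: "R = S1 - S0 - (1 - q) *\<^sub>R (S1 + S0) + q *\<^sub>R (S1 + S0)"
  have a: "(2 * q) *\<^sub>R S1 = q *\<^sub>R S1 + q *\<^sub>R S1" by (metis scaleR_2 scaleR_scaleR)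
  have b: "(2 * (1 - q)) *\<^sub>R S0 = (S0 - q *\<^sub>R S0) + (S0 - q *\<^sub>R S0)"
    by (metis scaleR_2 scaleR_scaleR scaleR_diff_left scaleR_one)
  show ?thesis unfolding a b h by (simp add: scaleR_diff_left scaleR_add_right algebra_simps)
qed

lemma int_part:
  fixes M :: "'a measure" and X :: "'a \<Rightarrow> real^'d" and L :: "real^'d \<Rightarrow> real^'q"
  assumes M: "prob_space M"
    and Xint: "integrable M X"
    and Omeas: "Ob \<in> borel_measurable M"
    and Obin: "\<forall>\<omega>\<in>space M. Ob \<omega> \<in> {0, 1}"
    and Xmean: "(\<integral>\<omega>. X \<omega> \<partial>M) = m"
    and c: "0 \<le> c" and L: "bounded_linear L"
  shows "\<exists>k\<ge>0. (\<integral>\<omega>. (c * (2 * Ob \<omega> - 1)) *\<^sub>R L (X \<omega> - m) \<partial>M)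
     = k *\<^sub>R L (cond_mean M X {\<omega> \<in> space M. Ob \<omega> = 1} - cond_mean M X {\<omega> \<in> space M. Ob \<omega> = 0})"
proof -
  interpret prob_space M by fact
  define A1 where "A1 = {\<omega> \<in> space M. Ob \<omega> = 1}"
  define A0 where "A0 = {\<omega> \<in> space M. Ob \<omega> = 0}"
  have A1s: "A1 \<in> sets M" unfolding A1_def using Omeas by measurable
  have A0s: "A0 \<in> sets M" unfolding A0_def using Omeas by measurable
  define p where "p = measure M A1"
  define q where "q = measure M A0"
  define S1 where "S1 = (\<integral>\<omega>. indicator A1 \<omega> *\<^sub>R X \<omega> \<partial>M)"
  define S0 where "S0 = (\<integral>\<omega>. indicator A0 \<omega> *\<^sub>R X \<omega> \<partial>M)"
  have disj: "A1 \<inter> A0 = {}" unfolding A1_def A0_def by auto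
  have un: "A1 \<union> A0 = space M" unfolding A1_def A0_def using Obin by auto
  have pq: "p + q = 1"
    using finite_measure_Union[OF A1s A0s disj] un prob_space unfolding p_def q_def by simp
  have i1: "integrable M (\<lambda>\<omega>. indicator A1 \<omega> *\<^sub>R X \<omega>)"
    using integrable_mult_indicator[OF A1s Xint] .
  have i0: "integrable M (\<lambda>\<omega>. indicator A0 \<omega> *\<^sub>R X \<omega>)"
    using integrable_mult_indicator[OF A0s Xint] .
  have ic1: "integrable M (\<lambda>\<omega>. indicator A1 \<omega> *\<^sub>R m)"
    using A1s by (intro integrable_scaleR_left integrable_real_indicator) (auto simp: emeasure_eq_measure)
  have ic0: "integrable M (\<lambda>\<omega>. indicator A0 \<omega> *\<^sub>R m)"
    using A0s by (intro integrable_scaleR_left integrable_real_indicator) (auto simp: emeasure_eq_measure)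
  have e1: "(\<integral>\<omega>. indicator A1 \<omega> *\<^sub>R m \<partial>M) = p *\<^sub>R m"
    unfolding p_def using A1s by (subst integral_scaleR_left) (auto simp: emeasure_eq_measure Int_absorb2 sets.sets_into_space)
  have e0: "(\<integral>\<omega>. indicator A0 \<omega> *\<^sub>R m \<partial>M) = q *\<^sub>R m"
    unfolding q_def using A0s by (subst integral_scaleR_left) (auto simp: emeasure_eq_measure Int_absorb2 sets.sets_into_space)
  have mS: "m = S1 + S0"
  proof -
    have "(\<integral>\<omega>. X \<omega> \<partial>M) = (\<integral>\<omega>. indicator A1 \<omega> *\<^sub>R X \<omega> + indicator A0 \<omega> *\<^sub>R X \<omega> \<partial>M)"
    proof (rule Bochner_Integration.integral_cong[OF refl])
      fix \<omega> assume "\<omega> \<in> space M"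
      then show "X \<omega> = indicator A1 \<omega> *\<^sub>R X \<omega> + indicator A0 \<omega> *\<^sub>R X \<omega>"
        using un disj by (auto simp: indicator_def)
    qed
    also have "\<dots> = S1 + S0" unfolding S1_def S0_def using i1 i0 by simp
    finally show ?thesis using Xmean by simp
  qed
  define R where "R = (\<integral>\<omega>. (2 * Ob \<omega> - 1) *\<^sub>R (X \<omega> - m) \<partial>M)"
  have R: "R = S1 - S0 - p *\<^sub>R m + q *\<^sub>R m"
  proof -
    have "R = (\<integral>\<omega>. indicator A1 \<omega> *\<^sub>R X \<omega> - indicator A0 \<omega> *\<^sub>R X \<omega>
               - indicator A1 \<omega> *\<^sub>R m + indicator A0 \<omega> *\<^sub>R m \<partial>M)"
      unfolding R_def
    proof (rule Bochner_Integration.integral_cong[OF refl])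
      fix \<omega> assume w: "\<omega> \<in> space M"
      show "(2 * Ob \<omega> - 1) *\<^sub>R (X \<omega> - m) = indicator A1 \<omega> *\<^sub>R X \<omega> - indicator A0 \<omega> *\<^sub>R X \<omega>
               - indicator A1 \<omega> *\<^sub>R m + indicator A0 \<omega> *\<^sub>R m"
        using Obin w unfolding A1_def A0_def by (auto simp: indicator_def)
    qed
    also have "\<dots> = S1 - S0 - p *\<^sub>R m + q *\<^sub>R m"
      unfolding S1_def S0_def using i1 i0 ic1 ic0 A1s A0s
        e1 e0
      by (simp add: Int_absorb2 sets.sets_into_space integral_scaleR_left del: integral_indicator)
    finally show ?thesis .
  qed
  have S1z: "S1 = 0" if "p = 0"
  proof -
    have "A1 \<in> null_sets M" using that A1s unfolding p_def
      by (simp add: null_sets_def emeasure_eq_measure)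
    then have "AE \<omega> in M. \<omega> \<notin> A1" by (rule AE_not_in)
    then have "S1 = (\<integral>\<omega>. 0 \<partial>M)" unfolding S1_def
      apply (intro integral_cong_AE)
        apply (rule borel_measurable_integrable[OF i1])
       apply simp
      by (auto elim!: eventually_mono)
    then show ?thesis by simp
  qed
  have S0z: "S0 = 0" if "q = 0"
  proof -
    have "A0 \<in> null_sets M" using that A0s unfolding q_def
      by (simp add: null_sets_def emeasure_eq_measure)
    then have "AE \<omega> in M. \<omega> \<notin> A0" by (rule AE_not_in)
    then have "S0 = (\<integral>\<omega>. 0 \<partial>M)" unfolding S0_def
      apply (intro integral_cong_AE)
        apply (rule borel_measurable_integrable[OF i0])
       apply simp
      by (auto elim!: eventually_mono)
    then show ?thesis by simp
  qed
  define dmu where "dmu = cond_mean M X A1 - cond_mean M X A0"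
  have dmu: "dmu = (1 / p) *\<^sub>R S1 - (1 / q) *\<^sub>R S0"
    unfolding dmu_def cond_mean_def p_def q_def S1_def S0_def ..
  have R2: "R = (2 * p * q) *\<^sub>R dmu"
  proof -
    have "R = (2 * q) *\<^sub>R S1 - (2 * p) *\<^sub>R S0"
    proof -
      have pe: "p = 1 - q" using pq by simp
      show ?thesis unfolding pe by (rule aux_vec[OF R[unfolded pe mS]])
    qed
    also have "\<dots> = (2 * p * q) *\<^sub>R dmu"
    proof (cases "p = 0 \<or> q = 0")
      case True
      then show ?thesis using S1z S0z dmu pq by auto
    next
      case False
      then show ?thesis unfolding dmu by (simp add: algebra_simps)
    qed
    finally show ?thesis .
  qed
  have p0: "0 \<le> p" "0 \<le> q" unfolding p_def q_def by auto
  have iR: "integrable M (\<lambda>\<omega>. (2 * Ob \<omega> - 1) *\<^sub>R (X \<omega> - m))"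
  proof -
    have "integrable M (\<lambda>\<omega>. indicator A1 \<omega> *\<^sub>R X \<omega> - indicator A0 \<omega> *\<^sub>R X \<omega>
               - indicator A1 \<omega> *\<^sub>R m + indicator A0 \<omega> *\<^sub>R m)"
      using i1 i0 ic1 ic0 by auto
    moreover have "integrable M (\<lambda>\<omega>. indicator A1 \<omega> *\<^sub>R X \<omega> - indicator A0 \<omega> *\<^sub>R X \<omega>
               - indicator A1 \<omega> *\<^sub>R m + indicator A0 \<omega> *\<^sub>R m) \<longleftrightarrow>
        integrable M (\<lambda>\<omega>. (2 * Ob \<omega> - 1) *\<^sub>R (X \<omega> - m))"
    proof (rule Bochner_Integration.integrable_cong[OF refl])
      fix \<omega> assume w: "\<omega> \<in> space M"
      show "indicator A1 \<omega> *\<^sub>R X \<omega> - indicator A0 \<omega> *\<^sub>R X \<omega>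
               - indicator A1 \<omega> *\<^sub>R m + indicator A0 \<omega> *\<^sub>R m = (2 * Ob \<omega> - 1) *\<^sub>R (X \<omega> - m)"
        using Obin w unfolding A1_def A0_def by (auto simp: indicator_def)
    qed
    ultimately show ?thesis by simp
  qed
  have "(\<integral>\<omega>. (c * (2 * Ob \<omega> - 1)) *\<^sub>R L (X \<omega> - m) \<partial>M)
        = (\<integral>\<omega>. L (c *\<^sub>R ((2 * Ob \<omega> - 1) *\<^sub>R (X \<omega> - m))) \<partial>M)"
    using linear_scale[OF bounded_linear.linear[OF L]] by simp
  also have "\<dots> = L (\<integral>\<omega>. c *\<^sub>R ((2 * Ob \<omega> - 1) *\<^sub>R (X \<omega> - m)) \<partial>M)"
    by (rule integral_bounded_linear[OF L]) (use integrable_scaleR_right[OF iR, of c] in simp)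
  also have "\<dots> = L (c *\<^sub>R R)" unfolding R_def by (rule arg_cong[where f=L], rule integral_scaleR_right)
  also have "\<dots> = (c * (2 * p * q)) *\<^sub>R L dmu"
    unfolding R2 using linear_scale[OF bounded_linear.linear[OF L]] by simp
  finally show ?thesis unfolding dmu_def A1_def A0_def using c p0
    by (intro exI[of _ "c * (2 * p * q)"]) auto
qed

theorem theorem4p4:
  fixes t dt sg \<beta> r s :: real
    and x xm vold :: "real^'d"
    and Sig :: "real^'d^'d"
    and v :: "real^'p \<Rightarrow> real^'d"
    and \<theta>0 :: "real^'p"
    and J :: "real^'p^'d"
    and M :: "'a measure"
    and X :: "'a \<Rightarrow> real^'d"
    and Ob :: "'a \<Rightarrow> real"
  assumes t: "0 < t" "t \<le> 1"
    and dt: "0 < dt" and sg: "0 < sg"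
    and Sig: "spd Sig"
    and beta: "0 < \<beta>"
    and vdiff: "(v has_derivative (\<lambda>h. J *v h)) (at \<theta>0)"
    and r: "0 \<le> r" "r \<le> 1"
    and M: "prob_space M"
    and Xmeas: "X \<in> borel_measurable M" and Xint: "integrable M X"
    and Omeas: "Ob \<in> borel_measurable M"
    and Obin: "\<forall>\<omega>\<in>space M. Ob \<omega> \<in> {0, 1}"
    and Xmean: "(\<integral>\<omega>. X \<omega> \<partial>M) = mu_step t dt sg x vold"
    and s: "0 < s"
  shows
   "let B = Bcoef t dt sg;
        Si = matrix_inv Sig;
        mu = mu_step t dt sg x;
        vp = (\<lambda>\<theta>. vold + \<beta> *\<^sub>R (v \<theta> - vold));
        vm = (\<lambda>\<theta>. vold - \<beta> *\<^sub>R (v \<theta> - vold));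
        Ep = (\<lambda>\<theta>. wnorm2 Si (xm - mu (vp \<theta>)));
        Em = (\<lambda>\<theta>. wnorm2 Si (xm - mu (vm \<theta>)));
        e = xm - mu vold;
        d = (\<lambda>\<theta>. mu (vp \<theta>) - mu vold);
        y = 2 * r - 1;
        z = (\<lambda>\<theta>. 1/2 * y * (Ep \<theta> - Em \<theta>));
        loss = (\<lambda>\<theta>. softplus (z \<theta>));
        negGrad = (2 * \<beta> * sigmoid (z \<theta>0) * y) *\<^sub>R (transpose J *v (B *\<^sub>R (Si *v e)));
        A1 = {\<omega> \<in> space M. Ob \<omega> = 1};
        A0 = {\<omega> \<in> space M. Ob \<omega> = 0};
        dmu = cond_mean M X A1 - cond_mean M X A0;
        G = (\<lambda>\<omega>. (2 * \<beta> * s * (2 * Ob \<omega> - 1)) *\<^sub>R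
                    (transpose J *v (B *\<^sub>R (Si *v (X \<omega> - mu vold)))))
    in (\<forall>\<theta>. Ep \<theta> - Em \<theta> = - 4 * ((Si *v e) \<bullet> d \<theta>))
     \<and> (loss has_derivative (\<lambda>h. (- negGrad) \<bullet> h)) (at \<theta>0)
     \<and> (\<exists>k>0. negGrad = k *\<^sub>R ((sigmoid (z \<theta>0) * y) *\<^sub>R (transpose J *v (B *\<^sub>R (Si *v e)))))
     \<and> (\<exists>k\<ge>0. (\<integral>\<omega>. G \<omega> \<partial>M) = k *\<^sub>R (transpose J *v (B *\<^sub>R (Si *v dmu))))"
proof -
  define B where "B = Bcoef t dt sg"
  define Si where "Si = matrix_inv Sig"
  define e where "e = xm - mu_step t dt sg x vold"
  define y where "y = 2 * r - 1"
  define w where "w = (\<lambda>\<theta>. B *\<^sub>R (\<beta> *\<^sub>R (v \<theta> - vold)))"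
  have sym: "transpose Si = Si" unfolding Si_def by (rule spd_inv_sym[OF Sig])
  have vp: "xm - mu_step t dt sg x (vold + \<beta> *\<^sub>R (v \<theta> - vold)) = e - w \<theta>" for \<theta>
    unfolding e_def w_def mu_step_def B_def by (simp add: scaleR_add_right)
  have vm: "xm - mu_step t dt sg x (vold - \<beta> *\<^sub>R (v \<theta> - vold)) = e + w \<theta>" for \<theta>
    unfolding e_def w_def mu_step_def B_def by (simp add: scaleR_diff_right)
  have dd: "mu_step t dt sg x (vold + \<beta> *\<^sub>R (v \<theta> - vold)) - mu_step t dt sg x vold = w \<theta>" for \<theta>
    unfolding w_def mu_step_def B_def by (simp add: scaleR_add_right)
  have EpEm: "wnorm2 Si (xm - mu_step t dt sg x (vold + \<beta> *\<^sub>R (v \<theta> - vold)))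
      - wnorm2 Si (xm - mu_step t dt sg x (vold - \<beta> *\<^sub>R (v \<theta> - vold)))
      = - 4 * ((Si *v e) \<bullet> w \<theta>)" for \<theta>
    unfolding vp vm by (rule quad_diff[OF sym])
  define a where "a = Si *v e"
  define c where "c = - 2 * y * B * \<beta>"
  have zform: "1/2 * y * (wnorm2 Si (xm - mu_step t dt sg x (vold + \<beta> *\<^sub>R (v \<theta> - vold)))
      - wnorm2 Si (xm - mu_step t dt sg x (vold - \<beta> *\<^sub>R (v \<theta> - vold))))
      = c * (a \<bullet> (v \<theta> - vold))" for \<theta>
    unfolding EpEm w_def a_def c_def by (simp add: inner_scaleR_right)
  have dz: "((\<lambda>\<theta>. c * (a \<bullet> (v \<theta> - vold))) has_derivative (\<lambda>h. c * (a \<bullet> (J *v h)))) (at \<theta>0)"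
    by (auto intro!: derivative_eq_intros vdiff)
  have dl: "((\<lambda>\<theta>. softplus (c * (a \<bullet> (v \<theta> - vold)))) has_derivative
       (\<lambda>h. sigmoid (c * (a \<bullet> (v \<theta>0 - vold))) * (c * (a \<bullet> (J *v h))))) (at \<theta>0)"
    using has_derivative_compose[OF dz has_field_derivative_imp_has_derivative[OF softplus_deriv]]
    by (simp add: mult.commute)
  have tj: "(transpose J *v u) \<bullet> h = u \<bullet> (J *v h)" for u h
    by (metis dot_lmul_matrix transpose_matrix_vector)
  have L: "bounded_linear (\<lambda>u. transpose J *v (B *\<^sub>R (Si *v u)))"
    using bounded_linear_compose[OF matrix_vector_mul_bounded_linear[of "transpose J"]
        bounded_linear_compose[OF bounded_linear_scaleR_right[of B] matrix_vector_mul_bounded_linear[of Si]]]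
    by simp
  show ?thesis unfolding Let_def B_def[symmetric] Si_def[symmetric] e_def[symmetric] y_def[symmetric]
  proof (intro conjI)
    show "\<forall>\<theta>. wnorm2 Si (xm - mu_step t dt sg x (vold + \<beta> *\<^sub>R (v \<theta> - vold)))
      - wnorm2 Si (xm - mu_step t dt sg x (vold - \<beta> *\<^sub>R (v \<theta> - vold)))
      = - 4 * ((Si *v e) \<bullet> (mu_step t dt sg x (vold + \<beta> *\<^sub>R (v \<theta> - vold)) - mu_step t dt sg x vold))"
      using EpEm dd by simp
  next
    show "((\<lambda>\<theta>. softplus (1/2 * y * (wnorm2 Si (xm - mu_step t dt sg x (vold + \<beta> *\<^sub>R (v \<theta> - vold)))
      - wnorm2 Si (xm - mu_step t dt sg x (vold - \<beta> *\<^sub>R (v \<theta> - vold)))))) has_derivative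
      (\<lambda>h. (- ((2 * \<beta> * sigmoid (1/2 * y * (wnorm2 Si (xm - mu_step t dt sg x (vold + \<beta> *\<^sub>R (v \<theta>0 - vold)))
      - wnorm2 Si (xm - mu_step t dt sg x (vold - \<beta> *\<^sub>R (v \<theta>0 - vold))))) * y) *\<^sub>R
        (transpose J *v (B *\<^sub>R (Si *v e))))) \<bullet> h)) (at \<theta>0)"
      unfolding zform
      by (rule has_derivative_eq_rhs[OF dl])
        (auto simp: tj dot_lmul_matrix a_def c_def inner_scaleR_left algebra_simps)
  next
    show "\<exists>k>0. (2 * \<beta> * sigmoid (1/2 * y * (wnorm2 Si (xm - mu_step t dt sg x (vold + \<beta> *\<^sub>R (v \<theta>0 - vold)))
      - wnorm2 Si (xm - mu_step t dt sg x (vold - \<beta> *\<^sub>R (v \<theta>0 - vold))))) * y) *\<^sub>R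
        (transpose J *v (B *\<^sub>R (Si *v e)))
      = k *\<^sub>R ((sigmoid (1/2 * y * (wnorm2 Si (xm - mu_step t dt sg x (vold + \<beta> *\<^sub>R (v \<theta>0 - vold)))
      - wnorm2 Si (xm - mu_step t dt sg x (vold - \<beta> *\<^sub>R (v \<theta>0 - vold))))) * y) *\<^sub>R
        (transpose J *v (B *\<^sub>R (Si *v e))))"
      using beta by (intro exI[of _ "2 * \<beta>"]) auto
  next
    show "\<exists>k\<ge>0. (\<integral>\<omega>. (2 * \<beta> * s * (2 * Ob \<omega> - 1)) *\<^sub>R
                    (transpose J *v (B *\<^sub>R (Si *v (X \<omega> - mu_step t dt sg x vold)))) \<partial>M)
        = k *\<^sub>R (transpose J *v (B *\<^sub>R (Si *v (cond_mean M X {\<omega> \<in> space M. Ob \<omega> = 1}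
           - cond_mean M X {\<omega> \<in> space M. Ob \<omega> = 0}))))"
      using int_part[OF M Xint Omeas Obin Xmean _ L, of "2 * \<beta> * s"] beta s by simp
  qed
qed

end
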